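(* There exists a countable, connected, arc transitive graph $G$ with infinite motion such that for no finite set $C$ does $G$ admit a distinguishing $C$-colouring of its vertex set.
   Context: All graphs are simple and undirected. A graph is arc transitive if its automorphism group acts transitively on ordered pairs $(u,v)$ of adjacent vertices. The motion of an automorphism $\varphi$ is the number (possibly infinite) of vertices $v$ with $\varphi(v)\neq v$; a graph has infinite motion if every non-identity automorphism has infinite motion. For a set $C$, a $C$-colouring of the vertex set $V$ is a map $c\colon V\to C$; an automorphism $\varphi$ preserves $c$ if $c(\varphi(v))=c(v)$ for all $v\in V$; the colouring is distinguishing if the identity is the only automorphism preserving it. *)

theory Defs
  imports Main "HOL-Library.Countable_Set"
begin

definition simple_graph :: "'a set \<Rightarrow> ('a \<Rightarrow> 'a \<Rightarrow> bool) \<Rightarrow> bool" where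
  "simple_graph V E \<longleftrightarrow>
     (\<forall>u v. E u v \<longrightarrow> u \<in> V \<and> v \<in> V) \<and>
     (\<forall>u v. E u v \<longrightarrow> E v u) \<and>
     (\<forall>v. \<not> E v v)"

definition connected_graph :: "'a set \<Rightarrow> ('a \<Rightarrow> 'a \<Rightarrow> bool) \<Rightarrow> bool" where
  "connected_graph V E \<longleftrightarrow> V \<noteq> {} \<and> (\<forall>u\<in>V. \<forall>v\<in>V. E\<^sup>*\<^sup>* u v)"

text \<open>Automorphisms: bijections of V onto itself preserving adjacency and non-adjacency.
  They are considered as maps on V only (values outside V are irrelevant).\<close>
definition automorphism :: "'a set \<Rightarrow> ('a \<Rightarrow> 'a \<Rightarrow> bool) \<Rightarrow> ('a \<Rightarrow> 'a) \<Rightarrow> bool" where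
  "automorphism V E \<phi> \<longleftrightarrow> bij_betw \<phi> V V \<and>
     (\<forall>u\<in>V. \<forall>v\<in>V. E (\<phi> u) (\<phi> v) \<longleftrightarrow> E u v)"

definition arc_transitive :: "'a set \<Rightarrow> ('a \<Rightarrow> 'a \<Rightarrow> bool) \<Rightarrow> bool" where
  "arc_transitive V E \<longleftrightarrow>
     (\<forall>u v x y. E u v \<longrightarrow> E x y \<longrightarrow>
        (\<exists>\<phi>. automorphism V E \<phi> \<and> \<phi> u = x \<and> \<phi> v = y))"

definition moved :: "'a set \<Rightarrow> ('a \<Rightarrow> 'a) \<Rightarrow> 'a set" where
  "moved V \<phi> = {v \<in> V. \<phi> v \<noteq> v}"

definition infinite_motion :: "'a set \<Rightarrow> ('a \<Rightarrow> 'a \<Rightarrow> bool) \<Rightarrow> bool" where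
  "infinite_motion V E \<longleftrightarrow>
     (\<forall>\<phi>. automorphism V E \<phi> \<longrightarrow> (\<exists>v\<in>V. \<phi> v \<noteq> v) \<longrightarrow> infinite (moved V \<phi>))"

definition preserves_colouring :: "'a set \<Rightarrow> ('a \<Rightarrow> 'a) \<Rightarrow> ('a \<Rightarrow> 'c) \<Rightarrow> bool" where
  "preserves_colouring V \<phi> c \<longleftrightarrow> (\<forall>v\<in>V. c (\<phi> v) = c v)"

definition distinguishing_colouring ::
    "'a set \<Rightarrow> ('a \<Rightarrow> 'a \<Rightarrow> bool) \<Rightarrow> 'c set \<Rightarrow> ('a \<Rightarrow> 'c) \<Rightarrow> bool" where
  "distinguishing_colouring V E C c \<longleftrightarrow>
     (\<forall>v\<in>V. c v \<in> C) \<and>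
     (\<forall>\<phi>. automorphism V E \<phi> \<longrightarrow> preserves_colouring V \<phi> c \<longrightarrow> (\<forall>v\<in>V. \<phi> v = v))"

end

theory Submission
  imports Defs
begin


lemma rat_between_notin:
  fixes r s :: rat assumes "r < s" "finite F"
  shows "\<exists>y. r < y \<and> y < s \<and> y \<notin> F"
proof -
  have "infinite ({r<..<s} - F)" using assms by (simp add: Diff_infinite_finite infinite_Ioo)
  then obtain y where "y \<in> {r<..<s} - F" using infinite_imp_nonempty by blast
  then show ?thesis by auto
qed

definition cdense :: "(rat \<Rightarrow> 'k) \<Rightarrow> rat \<Rightarrow> rat \<Rightarrow> bool" where
 "cdense \<kappa> \<alpha> \<beta> \<longleftrightarrow> (\<forall>x. \<alpha> < x \<and> x < \<beta> \<longrightarrow>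
     (\<forall>\<gamma> \<delta>. \<alpha> \<le> \<gamma> \<and> \<gamma> < \<delta> \<and> \<delta> \<le> \<beta> \<longrightarrow> (\<exists>y. \<gamma> < y \<and> y < \<delta> \<and> \<kappa> y = \<kappa> x)))"

lemma refine_aux:
  assumes fin: "finite (range \<kappa>)"
  shows "\<forall>\<alpha> \<beta>. card (\<kappa> ` {\<alpha><..<\<beta>}) = n \<longrightarrow> \<alpha> < \<beta> \<longrightarrow>
          (\<exists>\<alpha>' \<beta>'. \<alpha> \<le> \<alpha>' \<and> \<alpha>' < \<beta>' \<and> \<beta>' \<le> \<beta> \<and> cdense \<kappa> \<alpha>' \<beta>')"
proof (induction n rule: less_induct)
  case (less n)
  show ?case
  proof (intro allI impI)
    fix \<alpha> \<beta> :: rat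
    assume n: "card (\<kappa> ` {\<alpha><..<\<beta>}) = n" and ab: "\<alpha> < \<beta>"
    show "\<exists>\<alpha>' \<beta>'. \<alpha> \<le> \<alpha>' \<and> \<alpha>' < \<beta>' \<and> \<beta>' \<le> \<beta> \<and> cdense \<kappa> \<alpha>' \<beta>'"
    proof (cases "cdense \<kappa> \<alpha> \<beta>")
      case True then show ?thesis using ab by auto
    next
      case False
      then obtain x \<gamma> \<delta> where x: "\<alpha> < x" "x < \<beta>" and g: "\<alpha> \<le> \<gamma>" "\<gamma> < \<delta>" "\<delta> \<le> \<beta>"
        and no: "\<forall>y. \<gamma> < y \<and> y < \<delta> \<longrightarrow> \<kappa> y \<noteq> \<kappa> x" unfolding cdense_def by blast
      have sub: "\<kappa> ` {\<gamma><..<\<delta>} \<subseteq> \<kappa> ` {\<alpha><..<\<beta>} - {\<kappa> x}" using g no by force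
      have kx: "\<kappa> x \<in> \<kappa> ` {\<alpha><..<\<beta>}" using x by auto
      have fA: "finite (\<kappa> ` {\<alpha><..<\<beta>})" using fin by (rule finite_subset[rotated]) auto
      have "card (\<kappa> ` {\<gamma><..<\<delta>}) \<le> card (\<kappa> ` {\<alpha><..<\<beta>} - {\<kappa> x})"
        using sub fA by (intro card_mono) auto
      also have "\<dots> < card (\<kappa> ` {\<alpha><..<\<beta>})" using fA kx by (rule card_Diff1_less)
      finally have lt: "card (\<kappa> ` {\<gamma><..<\<delta>}) < n" using n by simp
      from less.IH[OF lt] g obtain \<alpha>' \<beta>' where "\<gamma> \<le> \<alpha>'" "\<alpha>' < \<beta>'" "\<beta>' \<le> \<delta>" "cdense \<kappa> \<alpha>' \<beta>'"
        by blast
      then show ?thesis using g by (intro exI[of _ \<alpha>'] exI[of _ \<beta>']) auto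
    qed
  qed
qed

lemma refine:
  assumes "finite (range \<kappa>)" "\<alpha> < \<beta>"
  shows "\<exists>\<alpha>' \<beta>'. \<alpha> \<le> \<alpha>' \<and> \<alpha>' < \<beta>' \<and> \<beta>' \<le> \<beta> \<and> cdense \<kappa> \<alpha>' \<beta>'"
  using refine_aux[OF assms(1)] assms(2) by blast

context
  fixes \<kappa> :: "rat \<Rightarrow> 'k" and \<alpha> \<beta> :: rat
  assumes ab: "\<alpha> < \<beta>" and cd: "cdense \<kappa> \<alpha> \<beta>"
begin

definition good :: "(rat \<times> rat) set \<Rightarrow> bool" where
  "good R \<longleftrightarrow> finite R \<and> (\<forall>(x,y)\<in>R. \<alpha> < x \<and> x < \<beta> \<and> \<alpha> < y \<and> y < \<beta> \<and> \<kappa> y = \<kappa> x)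
     \<and> (\<forall>(x,y)\<in>R. \<forall>(x',y')\<in>R. x < x' \<longleftrightarrow> y < y')"

lemma forth:
  assumes gR: "good R" and x: "\<alpha> < x" "x < \<beta>"
  shows "\<exists>y. good (insert (x,y) R)"
proof (cases "\<exists>y. (x,y) \<in> R")
  case True then obtain y where "(x,y)\<in>R" by blast
  then have "insert (x,y) R = R" by blast
  then show ?thesis using gR by metis
next
  case False
  define L where "L = {y'. \<exists>x'. (x',y') \<in> R \<and> x' < x}"
  define U where "U = {y'. \<exists>x'. (x',y') \<in> R \<and> x < x'}"
  have finR: "finite R" and memR: "\<forall>(x,y)\<in>R. \<alpha> < x \<and> x < \<beta> \<and> \<alpha> < y \<and> y < \<beta> \<and> \<kappa> y = \<kappa> x"
    and ordR: "\<forall>(x,y)\<in>R. \<forall>(x',y')\<in>R. x < x' \<longleftrightarrow> y < y'"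
    using gR unfolding good_def by auto
  have "L \<subseteq> snd ` R" "U \<subseteq> snd ` R" unfolding L_def U_def by force+
  hence fL: "finite L" and fU: "finite U" using finR by (auto intro: finite_subset)
  define lo where "lo = Max (insert \<alpha> L)"
  define hi where "hi = Min (insert \<beta> U)"
  have lt: "\<forall>l\<in>insert \<alpha> L. \<forall>u\<in>insert \<beta> U. l < u"
  proof (intro ballI)
    fix l u assume l: "l \<in> insert \<alpha> L" and u: "u \<in> insert \<beta> U"
    show "l < u"
    proof (cases "l = \<alpha>")
      case True
      then show ?thesis using u ab memR unfolding U_def by auto
    next
      case False
      then obtain x1 where x1: "(x1,l) \<in> R" "x1 < x" using l unfolding L_def by auto
      show ?thesis
      proof (cases "u = \<beta>")
        case True then show ?thesis using x1 memR by auto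
      next
        case False
        then obtain x2 where x2: "(x2,u) \<in> R" "x < x2" using u unfolding U_def by auto
        then show ?thesis using x1 ordR by fastforce
      qed
    qed
  qed
  have "lo \<in> insert \<alpha> L" unfolding lo_def using fL by (intro Max_in) auto
  moreover have "hi \<in> insert \<beta> U" unfolding hi_def using fU by (intro Min_in) auto
  ultimately have lohi: "lo < hi" using lt by blast
  have alo: "\<alpha> \<le> lo" unfolding lo_def using fL by simp
  have hib: "hi \<le> \<beta>" unfolding hi_def using fU by simp
  have Llo: "\<forall>l\<in>L. l \<le> lo" unfolding lo_def using fL by simp
  have Uhi: "\<forall>u\<in>U. hi \<le> u" unfolding hi_def using fU by simp
  obtain y where y: "lo < y" "y < hi" "\<kappa> y = \<kappa> x"
    using cd x alo hib lohi unfolding cdense_def by blast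
  have ord1: "\<forall>(x',y')\<in>R. (x < x' \<longleftrightarrow> y < y') \<and> (x' < x \<longleftrightarrow> y' < y)"
  proof (intro ballI, clarify)
    fix x' y' assume xy: "(x',y') \<in> R"
    have "x' \<noteq> x" using xy False by blast
    then consider "x < x'" | "x' < x" by linarith
    then show "(x < x' \<longleftrightarrow> y < y') \<and> (x' < x \<longleftrightarrow> y' < y)"
    proof cases
      case 1
      then have "y' \<in> U" unfolding U_def using xy by blast
      then have "y < y'" using Uhi y by fastforce
      then show ?thesis using 1 by auto
    next
      case 2
      then have "y' \<in> L" unfolding L_def using xy by blast
      then have "y' < y" using Llo y by fastforce
      then show ?thesis using 2 by auto
    qed
  qed
  have "good (insert (x,y) R)"
    unfolding good_def using finR memR ordR ord1 x y alo hib by auto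
  then show ?thesis by blast
qed

lemma good_conv: "good R \<Longrightarrow> good (R\<inverse>)"
  unfolding good_def by auto

lemma backw:
  assumes gR: "good R" and y: "\<alpha> < y" "y < \<beta>"
  shows "\<exists>x. good (insert (x,y) R)"
proof -
  obtain x where "good (insert (y,x) (R\<inverse>))" using forth[OF good_conv[OF gR] y] by blast
  then have "good ((insert (y,x) (R\<inverse>))\<inverse>)" by (rule good_conv)
  moreover have "(insert (y,x) (R\<inverse>))\<inverse> = insert (x,y) R" by auto
  ultimately show ?thesis by metis
qed

fun seq :: "rat \<Rightarrow> rat \<Rightarrow> nat \<Rightarrow> (rat \<times> rat) set" where
  "seq a b 0 = {(a,b)}"
| "seq a b (Suc n) =
     (if even n then
        (if \<alpha> < from_nat (n div 2) \<and> from_nat (n div 2) < \<beta>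
         then insert (from_nat (n div 2), SOME y. good (insert (from_nat (n div 2), y) (seq a b n))) (seq a b n)
         else seq a b n)
      else
        (if \<alpha> < from_nat (n div 2) \<and> from_nat (n div 2) < \<beta>
         then insert (SOME x. good (insert (x, from_nat (n div 2)) (seq a b n)), from_nat (n div 2)) (seq a b n)
         else seq a b n))"

lemma good_seq:
  assumes "good {(a,b)}"
  shows "good (seq a b n)"
proof (induction n)
  case 0 then show ?case using assms by simp
next
  case (Suc n)
  show ?case
  proof (cases "even n")
    case True
    show ?thesis
    proof (cases "\<alpha> < from_nat (n div 2) \<and> from_nat (n div 2) < (\<beta>::rat)")
      case c: True
      have "good (insert (from_nat (n div 2), SOME y. good (insert (from_nat (n div 2), y) (seq a b n))) (seq a b n))"
        using someI_ex[OF forth[OF Suc.IH]] c by blast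
      then show ?thesis using True c by simp
    next
      case False then show ?thesis using True Suc.IH by auto
    qed
  next
    case odd: False
    show ?thesis
    proof (cases "\<alpha> < from_nat (n div 2) \<and> from_nat (n div 2) < (\<beta>::rat)")
      case c: True
      have "good (insert (SOME x. good (insert (x, from_nat (n div 2)) (seq a b n)), from_nat (n div 2)) (seq a b n))"
        using someI_ex[OF backw[OF Suc.IH]] c by blast
      then show ?thesis using odd c by simp
    next
      case False then show ?thesis using odd Suc.IH by auto
    qed
  qed
qed

lemma seq_mono: "m \<le> n \<Longrightarrow> seq a b m \<subseteq> seq a b n"
  by (rule lift_Suc_mono_le[of "seq a b"]) auto

lemma seq_dom:
  assumes "\<alpha> < x" "x < \<beta>" shows "\<exists>y. (x,y) \<in> seq a b (Suc (2 * to_nat x))"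
  using assms by auto

lemma seq_ran:
  assumes "\<alpha> < y" "y < \<beta>" shows "\<exists>x. (x,y) \<in> seq a b (Suc (Suc (2 * to_nat y)))"
  using assms by auto


lemma bf_exists:
  assumes a: "\<alpha><a" "a<\<beta>" and b: "\<alpha><b" "b<\<beta>" and kab: "\<kappa> b = \<kappa> a"
  shows "\<exists>f. strict_mono f \<and> surj f \<and> (\<forall>x. \<kappa> (f x) = \<kappa> x) \<and> f a = b"
proof -
  have g0: "good {(a,b)}" unfolding good_def using a b kab by auto
  define R where "R = (\<Union>n. seq a b n)"
  have memR: "\<forall>(x,y)\<in>R. \<alpha> < x \<and> x < \<beta> \<and> \<alpha> < y \<and> y < \<beta> \<and> \<kappa> y = \<kappa> x"
  proof (intro ballI, clarify)
    fix x y assume "(x,y) \<in> R"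
    then obtain n where "(x,y) \<in> seq a b n" unfolding R_def by blast
    moreover have "good (seq a b n)" by (rule good_seq[OF g0])
    ultimately show "\<alpha> < x \<and> x < \<beta> \<and> \<alpha> < y \<and> y < \<beta> \<and> \<kappa> y = \<kappa> x"
      unfolding good_def by blast
  qed
  have ordR: "x < x' \<longleftrightarrow> y < y'" if h: "(x,y)\<in>R" "(x',y')\<in>R" for x y x' y'
  proof -
    obtain m n where "(x,y) \<in> seq a b m" "(x',y') \<in> seq a b n" using h unfolding R_def by blast
    then have "(x,y) \<in> seq a b (max m n)" "(x',y') \<in> seq a b (max m n)"
      using seq_mono by (meson max.cobounded1 max.cobounded2 subsetD)+
    then show ?thesis using good_seq[OF g0, of "max m n"] unfolding good_def by blast
  qed
  have domR: "\<exists>y. (x,y)\<in>R" if h: "\<alpha><x" "x<\<beta>" for x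
  proof -
    obtain y where "(x,y) \<in> seq a b (Suc (2 * to_nat x))" using seq_dom[OF h, of a b] by blast
    then have "(x,y) \<in> R" unfolding R_def by (intro UN_I[OF UNIV_I])
    then show ?thesis by (intro exI)
  qed
  have ranR: "\<exists>x. (x,y)\<in>R" if h: "\<alpha><y" "y<\<beta>" for y
  proof -
    obtain x where "(x,y) \<in> seq a b (Suc (Suc (2 * to_nat y)))" using seq_ran[OF h, of a b] by blast
    then have "(x,y) \<in> R" unfolding R_def by (intro UN_I[OF UNIV_I])
    then show ?thesis by (intro exI)
  qed
  have uniq: "y = y'" if h: "(x,y)\<in>R" "(x,y')\<in>R" for x y y'
  proof -
    have "\<not> y < y'" using ordR[OF h] by simp
    moreover have "\<not> y' < y" using ordR[OF h(2) h(1)] by simp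
    ultimately show ?thesis by simp
  qed
  have uniq2: "x = x'" if h: "(x,y)\<in>R" "(x',y)\<in>R" for x x' y
  proof -
    have "\<not> x < x'" using ordR[OF h] by simp
    moreover have "\<not> x' < x" using ordR[OF h(2) h(1)] by simp
    ultimately show ?thesis by simp
  qed
  define f where "f x = (if \<alpha><x \<and> x<\<beta> then (SOME y. (x,y)\<in>R) else x)" for x
  have fR: "(x, f x) \<in> R" if "\<alpha><x" "x<\<beta>" for x
    using someI_ex[OF domR[OF that]] that unfolding f_def by simp
  have fJ: "\<alpha> < f x \<and> f x < \<beta>" if "\<alpha><x" "x<\<beta>" for x using memR fR[OF that] by blast
  have fout: "f x = x" if "\<not> (\<alpha><x \<and> x<\<beta>)" for x using that unfolding f_def by auto
  have sm: "strict_mono f"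
  proof (rule strict_monoI)
    fix x y :: rat assume xy: "x < y"
    show "f x < f y"
    proof (cases "\<alpha><x \<and> x<\<beta>")
      case xin: True
      have fx: "(x, f x) \<in> R" using fR xin by blast
      have fxb: "f x < \<beta>" using fJ xin by blast
      show ?thesis
      proof (cases "\<alpha><y \<and> y<\<beta>")
        case True
        have fy: "(y, f y) \<in> R" using fR True by blast
        show ?thesis using ordR[OF fx fy] xy by blast
      next
        case False
        have "f y = y" using fout False by blast
        moreover have "\<beta> \<le> y" using False xin xy by linarith
        ultimately show ?thesis using fxb by linarith
      qed
    next
      case xout: False
      have fxx: "f x = x" using fout xout by blast
      show ?thesis
      proof (cases "\<alpha><y \<and> y<\<beta>")
        case True
        have "\<alpha> < f y" using fJ True by blast
        moreover have "x \<le> \<alpha>" using True xout xy by linarith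
        ultimately show ?thesis using fxx by linarith
      next
        case False
        have "f y = y" using fout False by blast
        then show ?thesis using fxx xy by simp
      qed
    qed
  qed
  have su: "surj f"
  proof (rule surjI)
    fix y
    show "f (if \<alpha><y \<and> y<\<beta> then (SOME x. (x,y)\<in>R) else y) = y"
    proof (cases "\<alpha><y \<and> y<\<beta>")
      case True
      define x where "x = (SOME x. (x,y)\<in>R)"
      have xy: "(x,y)\<in>R" unfolding x_def using someI_ex[OF ranR] True by blast
      then have "\<alpha><x" "x<\<beta>" using memR by auto
      then have "(x, f x)\<in>R" by (rule fR)
      then have "f x = y" using uniq xy by blast
      then show ?thesis using True x_def by simp
    next
      case False then show ?thesis using fout by auto
    qed
  qed
  have col: "\<forall>x. \<kappa> (f x) = \<kappa> x"
  proof
    fix x show "\<kappa> (f x) = \<kappa> x"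
    proof (cases "\<alpha><x \<and> x<\<beta>")
      case True
      have "(x, f x) \<in> R" using fR True by blast
      then show ?thesis using memR by blast
    next
      case False then show ?thesis using fout by simp
    qed
  qed
  have "(a,b) \<in> R" unfolding R_def by (rule UN_I[of 0]) auto
  then have "f a = b" using fR[OF a] uniq by blast
  then show ?thesis using sm su col by blast
qed

end

theorem core:
  fixes \<kappa> :: "rat \<Rightarrow> 'k" assumes "finite (range \<kappa>)"
  shows "\<exists>f. strict_mono f \<and> surj f \<and> (\<forall>x. \<kappa> (f x) = \<kappa> x) \<and> (\<exists>x. f x \<noteq> x)"
proof -
  obtain \<alpha> \<beta> where ab: "\<alpha><\<beta>" "cdense \<kappa> \<alpha> \<beta>" using refine[OF assms, of 0 1] by auto
  define a where "a = (\<alpha>+\<beta>)/2"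
  have a: "\<alpha><a" "a<\<beta>" unfolding a_def using ab by auto
  then obtain b where b: "a<b" "b<\<beta>" "\<kappa> b = \<kappa> a"
    using ab(2) unfolding cdense_def by (meson order_refl less_imp_le)
  obtain f where "strict_mono f" "surj f" "\<forall>x. \<kappa> (f x) = \<kappa> x" "f a = b"
    using bf_exists[OF ab a, of b] a b by auto
  moreover have "f a \<noteq> a" using b \<open>f a = b\<close> by simp
  ultimately show ?thesis by blast
qed



type_synonym pt = "rat \<times> bool"

definition A :: "pt \<Rightarrow> pt \<Rightarrow> bool" where
  "A p q \<longleftrightarrow> (\<not> snd p \<and> snd q \<and> fst p < fst q) \<or> (snd p \<and> \<not> snd q \<and> fst q < fst p)"

lemma A_sym: "A p q \<Longrightarrow> A q p" unfolding A_def by auto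
lemma A_irr: "\<not> A p p" unfolding A_def by auto

lemma lift_aut:
  assumes sm: "strict_mono f" and su: "surj f"
  shows "automorphism UNIV A (\<lambda>(x,i). (f x, i))"
proof -
  have inj: "inj f" using sm by (rule strict_mono_imp_inj_on)
  have "inj (\<lambda>(x::rat,i::bool). (f x, i))" using inj by (auto simp: inj_def)
  moreover have "surj (\<lambda>(x::rat,i::bool). (f x, i))"
  proof (rule surjI)
    fix p :: pt
    show "(\<lambda>(x,i). (f x, i)) (inv f (fst p), snd p) = p" using su by (simp add: surj_f_inv_f)
  qed
  ultimately have "bij_betw (\<lambda>(x::rat,i::bool). (f x, i)) UNIV UNIV" by (simp add: bij_betw_def)
  moreover have "\<forall>u\<in>UNIV. \<forall>v\<in>UNIV. A ((\<lambda>(x,i). (f x, i)) u) ((\<lambda>(x,i). (f x, i)) v) \<longleftrightarrow> A u v"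
    using strict_mono_less[OF sm] by (auto simp: A_def)
  ultimately show ?thesis unfolding automorphism_def by blast
qed

lemma swap_aut:
  assumes sm: "\<forall>u v. u < v \<longrightarrow> f v < f u" and su: "surj f"
  shows "automorphism UNIV A (\<lambda>(x,i). (f x, \<not> i))"
proof -
  have less: "f x < f y \<longleftrightarrow> y < x" for x y
    using sm by (metis less_asym' linorder_neqE)
  have inj: "inj f" unfolding inj_def using sm by (metis less_irrefl linorder_neqE)
  have "inj (\<lambda>(x::rat,i::bool). (f x, \<not> i))" using inj by (auto simp: inj_def)
  moreover have "surj (\<lambda>(x::rat,i::bool). (f x, \<not> i))"
  proof (rule surjI)
    fix p :: pt
    show "(\<lambda>(x,i). (f x, \<not> i)) (inv f (fst p), \<not> snd p) = p" using su by (simp add: surj_f_inv_f)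
  qed
  ultimately have "bij_betw (\<lambda>(x::rat,i::bool). (f x, \<not> i)) UNIV UNIV" by (simp add: bij_betw_def)
  moreover have "\<forall>u\<in>UNIV. \<forall>v\<in>UNIV. A ((\<lambda>(x,i). (f x, \<not> i)) u) ((\<lambda>(x,i). (f x, \<not> i)) v) \<longleftrightarrow> A u v"
    using less by (auto simp: A_def)
  ultimately show ?thesis unfolding automorphism_def by blast
qed

lemma inc_map:
  fixes x y x' y' :: rat
  assumes "x < y" "x' < y'"
  shows "\<exists>f. strict_mono f \<and> surj f \<and> f x = x' \<and> f y = y'"
proof -
  define m where "m = (y' - x') / (y - x)"
  have m: "m > 0" unfolding m_def using assms by simp
  define f where "f t = x' + (t - x) * m" for t
  have "strict_mono f" unfolding strict_mono_def f_def using m by simp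
  moreover have "surj f"
  proof (rule surjI)
    fix s show "f (x + (s - x') / m) = s" unfolding f_def using m by (simp add: field_simps)
  qed
  moreover have "f x = x'" "f y = y'" unfolding f_def m_def using assms by (simp_all add: field_simps)
  ultimately show ?thesis by blast
qed

lemma dec_map:
  fixes x y x' y' :: rat
  assumes "x < y" "y' < x'"
  shows "\<exists>f. (\<forall>u v. u < v \<longrightarrow> f v < f u) \<and> surj f \<and> f x = x' \<and> f y = y'"
proof -
  define m where "m = (y' - x') / (y - x)"
  have m: "m < 0" unfolding m_def using assms by (simp add: divide_neg_pos)
  define f where "f t = x' + (t - x) * m" for t
  have "\<forall>u v. u < v \<longrightarrow> f v < f u" unfolding f_def using m by (simp add: mult_strict_right_mono_neg)
  moreover have "surj f"
  proof (rule surjI)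
    fix s show "f (x + (s - x') / m) = s" unfolding f_def using m by (simp add: field_simps)
  qed
  moreover have "f x = x'" "f y = y'" unfolding f_def m_def using assms by (simp_all add: field_simps)
  ultimately show ?thesis by blast
qed

lemma arcP:
  assumes "A p q" "A p' q'"
  shows "\<exists>\<psi>. automorphism UNIV A \<psi> \<and> \<psi> p = p' \<and> \<psi> q = q'"
proof -
  obtain a i b j a' i' b' j' where pq: "p = (a,i)" "q = (b,j)" "p' = (a',i')" "q' = (b',j')"
    by (metis prod.exhaust)
  have h1: "(\<not> i \<and> j \<and> a < b) \<or> (i \<and> \<not> j \<and> b < a)" using assms(1) pq unfolding A_def by auto
  have h2: "(\<not> i' \<and> j' \<and> a' < b') \<or> (i' \<and> \<not> j' \<and> b' < a')" using assms(2) pq unfolding A_def by auto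
  consider (ss) "i' = i" "j' = j" | (dd) "i' = (\<not> i)" "j' = (\<not> j)" using h1 h2 by blast
  then show ?thesis
  proof cases
    case ss
    obtain f where f: "strict_mono f" "surj f" "f a = a'" "f b = b'"
    proof (cases i)
      case True
      then have "b < a" "b' < a'" using h1 h2 ss by auto
      then show ?thesis using inc_map[of b a b' a'] that by blast
    next
      case False
      then have "a < b" "a' < b'" using h1 h2 ss by auto
      then show ?thesis using inc_map[of a b a' b'] that by blast
    qed
    show ?thesis using lift_aut[OF f(1,2)] f(3,4) pq ss by (intro exI[of _ "\<lambda>(x,i). (f x, i)"]) auto
  next
    case dd
    obtain f where f: "\<forall>u v. u < v \<longrightarrow> f v < f u" "surj f" "f a = a'" "f b = b'"
    proof (cases i)
      case True
      then have "b < a" "a' < b'" using h1 h2 dd by auto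
      then show ?thesis using dec_map[where x=b and y=a and x'=b' and y'=a'] that by blast
    next
      case False
      then have "a < b" "b' < a'" using h1 h2 dd by auto
      then show ?thesis using dec_map[where x=a and y=b and x'=a' and y'=b'] that by blast
    qed
    show ?thesis using swap_aut[OF f(1,2)] f(3,4) pq dd by (intro exI[of _ "\<lambda>(x,i). (f x, \<not> i)"]) auto
  qed
qed

lemma aut_adj: "automorphism UNIV A \<psi> \<Longrightarrow> A (\<psi> p) (\<psi> q) \<longleftrightarrow> A p q"
  unfolding automorphism_def by blast

lemma motionP:
  assumes aut: "automorphism UNIV A \<psi>" and fin: "finite {p. \<psi> p \<noteq> p}"
  shows "\<psi> p = p"
proof -
  define F where "F = fst ` {p. \<psi> p \<noteq> p}"
  have fF: "finite F" unfolding F_def using fin by simp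
  have fix1: "\<psi> (y,b) = (y,b)" if "y \<notin> F" for y b
    using that unfolding F_def by (metis (mono_tags, lifting) fst_conv image_eqI mem_Collect_eq)
  have adj1: "A p (y,b) \<longleftrightarrow> A (\<psi> p) (y,b)" if "y \<notin> F" for y b
    using aut_adj[OF aut, of p "(y,b)"] fix1[OF that] by simp
  have adj2: "A (y,b) p \<longleftrightarrow> A (y,b) (\<psi> p)" if "y \<notin> F" for y b
    using aut_adj[OF aut, of "(y,b)" p] fix1[OF that] by simp
  obtain a i where p: "p = (a,i)" by (metis prod.exhaust)
  obtain c j where c: "\<psi> p = (c,j)" by (metis prod.exhaust)
  show ?thesis
  proof (cases i)
    case False
    obtain y0 where y0: "a < y0" "y0 < a + 1" "y0 \<notin> F" using rat_between_notin[OF _ fF, of a "a+1"] by auto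
    have "A (c,j) (y0,True)" using adj1[OF y0(3), of True] p c False y0 by (simp add: A_def)
    then have j: "j = False" unfolding A_def by auto
    have "c = a"
    proof (rule ccontr)
      assume "c \<noteq> a"
      then consider "c < a" | "a < c" by linarith
      then show False
      proof cases
        case 1
        obtain y where y: "c < y" "y < a" "y \<notin> F" using rat_between_notin[OF 1 fF] by auto
        show False using adj1[OF y(3), of True] p c False j y by (simp add: A_def)
      next
        case 2
        obtain y where y: "a < y" "y < c" "y \<notin> F" using rat_between_notin[OF 2 fF] by auto
        show False using adj1[OF y(3), of True] p c False j y by (simp add: A_def)
      qed
    qed
    then show ?thesis using p c j False by simp
  next
    case True
    obtain y0 where y0: "a - 1 < y0" "y0 < a" "y0 \<notin> F" using rat_between_notin[OF _ fF, of "a - 1" a] by auto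
    have "A (y0,False) (c,j)" using adj2[OF y0(3), of False] p c True y0 by (simp add: A_def)
    then have j: "j = True" unfolding A_def by auto
    have "c = a"
    proof (rule ccontr)
      assume "c \<noteq> a"
      then consider "c < a" | "a < c" by linarith
      then show False
      proof cases
        case 1
        obtain y where y: "c < y" "y < a" "y \<notin> F" using rat_between_notin[OF 1 fF] by auto
        show False using adj2[OF y(3), of False] p c True j y by (simp add: A_def)
      next
        case 2
        obtain y where y: "a < y" "y < c" "y \<notin> F" using rat_between_notin[OF 2 fF] by auto
        show False using adj2[OF y(3), of False] p c True j y by (simp add: A_def)
      qed
    qed
    then show ?thesis using p c j True by simp
  qed
qed

lemma to0: "A\<^sup>*\<^sup>* p (0, False)"
proof -
  have F: "A\<^sup>*\<^sup>* (x, False) (0, False)" for x :: rat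
  proof -
    define t where "t = max x 0 + 1"
    have "A (x,False) (t,True)" "A (t,True) (0,False)" unfolding A_def t_def by auto
    then show ?thesis by (meson converse_rtranclp_into_rtranclp rtranclp.rtrancl_refl)
  qed
  obtain x i where p: "p = (x,i)" by (metis prod.exhaust)
  show ?thesis
  proof (cases i)
    case False then show ?thesis using F p by simp
  next
    case True
    have "A (x,True) (x - 1, False)" unfolding A_def by auto
    then have "A\<^sup>*\<^sup>* (x,True) (0,False)" using F[of "x-1"] by (meson converse_rtranclp_into_rtranclp)
    then show ?thesis using p True by simp
  qed
qed

lemma connP: "A\<^sup>*\<^sup>* p q"
proof -
  have sym: "A\<inverse>\<inverse> = A" using A_sym by (auto intro!: ext)
  have "A\<inverse>\<inverse>\<^sup>*\<^sup>* (0,False) q" using to0[of q] by (rule rtranclp_converseI)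
  then have "A\<^sup>*\<^sup>* (0,False) q" using sym by simp
  then show ?thesis using to0[of p] by (meson rtranclp_trans)
qed



definition VV :: "nat set" where "VV = range (to_nat :: pt \<Rightarrow> nat)"
definition EE :: "nat \<Rightarrow> nat \<Rightarrow> bool" where
  "EE m n \<longleftrightarrow> m \<in> VV \<and> n \<in> VV \<and> A (from_nat m) (from_nat n)"

lemma inVV[simp]: "to_nat (p::pt) \<in> VV" unfolding VV_def by simp
lemma VV_cases: "n \<in> VV \<Longrightarrow> to_nat (from_nat n :: pt) = n"
  unfolding VV_def by auto
lemma EE_to[simp]: "EE (to_nat p) (to_nat q) \<longleftrightarrow> A p q" unfolding EE_def by simp

lemma T1:
  assumes aut: "automorphism VV EE \<phi>"
  shows "automorphism UNIV A (\<lambda>p. from_nat (\<phi> (to_nat p)))"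
proof -
  have bij: "bij_betw \<phi> VV VV" and adj: "\<forall>u\<in>VV. \<forall>v\<in>VV. EE (\<phi> u) (\<phi> v) \<longleftrightarrow> EE u v"
    using aut unfolding automorphism_def by auto
  define \<psi> :: "pt \<Rightarrow> pt" where "\<psi> p = from_nat (\<phi> (to_nat p))" for p
  have key: "to_nat (\<psi> p) = \<phi> (to_nat p)" for p
  proof -
    have "\<phi> (to_nat p) \<in> VV" using bij inVV[of p] by (meson bij_betwE)
    then show ?thesis unfolding \<psi>_def by (rule VV_cases)
  qed
  have "inj \<psi>"
  proof (rule injI)
    fix p q assume "\<psi> p = \<psi> q"
    then have "\<phi> (to_nat p) = \<phi> (to_nat q)" using key by metis
    then have "to_nat p = to_nat q" using bij unfolding bij_betw_def by (meson inVV inj_onD)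
    then show "p = q" by (meson inj_to_nat injD)
  qed
  moreover have "surj \<psi>"
    unfolding surj_def
  proof
    fix q :: pt
    have "to_nat q \<in> \<phi> ` VV" using bij unfolding bij_betw_def by simp
    then obtain v where v: "v \<in> VV" "to_nat q = \<phi> v" by blast
    then obtain p :: pt where "v = to_nat p" unfolding VV_def by blast
    then have "\<psi> (from_nat v) = q" unfolding \<psi>_def using v by (metis from_nat_to_nat)
    then show "\<exists>p. q = \<psi> p" by metis
  qed
  ultimately have "bij_betw \<psi> UNIV UNIV" by (simp add: bij_betw_def)
  moreover have "\<forall>u\<in>UNIV. \<forall>v\<in>UNIV. A (\<psi> u) (\<psi> v) \<longleftrightarrow> A u v"
  proof (intro ballI)
    fix u v :: pt
    have "A (\<psi> u) (\<psi> v) \<longleftrightarrow> EE (to_nat (\<psi> u)) (to_nat (\<psi> v))" by simp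
    also have "\<dots> \<longleftrightarrow> EE (to_nat u) (to_nat v)" unfolding key using adj by simp
    also have "\<dots> \<longleftrightarrow> A u v" by simp
    finally show "A (\<psi> u) (\<psi> v) \<longleftrightarrow> A u v" .
  qed
  ultimately show ?thesis unfolding automorphism_def \<psi>_def by blast
qed

lemma T2:
  assumes aut: "automorphism UNIV A \<psi>"
  shows "automorphism VV EE (\<lambda>n. to_nat (\<psi> (from_nat n)))"
proof -
  have bij: "bij_betw \<psi> UNIV UNIV" and adj: "\<And>u v. A (\<psi> u) (\<psi> v) \<longleftrightarrow> A u v"
    using aut unfolding automorphism_def by auto
  have injp: "inj \<psi>" and surjp: "surj \<psi>" using bij unfolding bij_betw_def by auto
  define \<phi> where "\<phi> n = to_nat (\<psi> (from_nat n))" for n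
  have "inj_on \<phi> VV"
  proof (rule inj_onI)
    fix n m assume nm: "n \<in> VV" "m \<in> VV" "\<phi> n = \<phi> m"
    then have "\<psi> (from_nat n) = \<psi> (from_nat m)" unfolding \<phi>_def by (meson inj_to_nat injD)
    then have "(from_nat n :: pt) = from_nat m" using injp by (meson injD)
    then show "n = m" using VV_cases nm by metis
  qed
  moreover have "\<phi> ` VV = VV"
  proof
    show "\<phi> ` VV \<subseteq> VV" unfolding \<phi>_def by auto
    show "VV \<subseteq> \<phi> ` VV"
    proof
      fix n assume "n \<in> VV"
      then obtain q :: pt where q: "n = to_nat q" unfolding VV_def by blast
      obtain p where "q = \<psi> p" using surjp by (metis surjD)
      then have "\<phi> (to_nat p) = n" unfolding \<phi>_def using q by simp
      then show "n \<in> \<phi> ` VV" using inVV by (metis image_eqI)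
    qed
  qed
  ultimately have "bij_betw \<phi> VV VV" by (simp add: bij_betw_def)
  moreover have "\<forall>u\<in>VV. \<forall>v\<in>VV. EE (\<phi> u) (\<phi> v) \<longleftrightarrow> EE u v"
  proof (intro ballI)
    fix u v assume uv: "u \<in> VV" "v \<in> VV"
    have "EE (\<phi> u) (\<phi> v) \<longleftrightarrow> A (\<psi> (from_nat u)) (\<psi> (from_nat v))" unfolding \<phi>_def by simp
    also have "\<dots> \<longleftrightarrow> A (from_nat u) (from_nat v)" by (rule adj)
    also have "\<dots> \<longleftrightarrow> EE u v" unfolding EE_def using uv by simp
    finally show "EE (\<phi> u) (\<phi> v) \<longleftrightarrow> EE u v" .
  qed
  ultimately show ?thesis unfolding automorphism_def \<phi>_def by blast
qed

lemma conn_lift: "A\<^sup>*\<^sup>* p q \<Longrightarrow> EE\<^sup>*\<^sup>* (to_nat p) (to_nat q)"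
proof (induction rule: rtranclp_induct)
  case base then show ?case by simp
next
  case (step y z)
  then show ?case by (metis EE_to rtranclp.rtrancl_into_rtrancl)
qed

theorem theorem2:
  shows "\<exists>(V :: nat set) (E :: nat \<Rightarrow> nat \<Rightarrow> bool).
           simple_graph V E \<and> countable V \<and> connected_graph V E \<and>
           arc_transitive V E \<and> infinite_motion V E \<and>
           (\<forall>(C :: nat set) (c :: nat \<Rightarrow> nat). finite C \<longrightarrow> \<not> distinguishing_colouring V E C c)"
proof (intro exI conjI)
  show "simple_graph VV EE"
    unfolding simple_graph_def EE_def using A_sym A_irr by blast
  show "countable VV" by simp
  show "connected_graph VV EE"
    unfolding connected_graph_def
  proof (intro conjI ballI)
    show "VV \<noteq> {}" using inVV by blast
    fix u v assume "u \<in> VV" "v \<in> VV"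
    then obtain p q :: pt where "u = to_nat p" "v = to_nat q" unfolding VV_def by blast
    then show "EE\<^sup>*\<^sup>* u v" using conn_lift[OF connP] by simp
  qed
  show "arc_transitive VV EE"
    unfolding arc_transitive_def
  proof (intro allI impI)
    fix u v x y assume uv: "EE u v" and xy: "EE x y"
    obtain p q p' q' :: pt where pq: "u = to_nat p" "v = to_nat q" "x = to_nat p'" "y = to_nat q'"
      using uv xy unfolding EE_def VV_def by blast
    have "A p q" "A p' q'" using uv xy pq by simp_all
    then obtain \<psi> where \<psi>: "automorphism UNIV A \<psi>" "\<psi> p = p'" "\<psi> q = q'" using arcP by blast
    show "\<exists>\<phi>. automorphism VV EE \<phi> \<and> \<phi> u = x \<and> \<phi> v = y"
      using T2[OF \<psi>(1)] \<psi>(2,3) pq by (intro exI[of _ "\<lambda>n. to_nat (\<psi> (from_nat n))"]) simp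
  qed
  show "infinite_motion VV EE"
    unfolding infinite_motion_def
  proof (intro allI impI notI)
    fix \<phi> assume aut: "automorphism VV EE \<phi>" and ex: "\<exists>v\<in>VV. \<phi> v \<noteq> v"
      and fin: "finite (moved VV \<phi>)"
    define \<psi> :: "pt \<Rightarrow> pt" where "\<psi> p = from_nat (\<phi> (to_nat p))" for p
    have aut\<psi>: "automorphism UNIV A \<psi>" unfolding \<psi>_def by (rule T1[OF aut])
    have bij: "bij_betw \<phi> VV VV" using aut unfolding automorphism_def by auto
    have key: "to_nat (\<psi> p) = \<phi> (to_nat p)" for p
    proof -
      have "\<phi> (to_nat p) \<in> VV" using bij inVV[of p] by (meson bij_betwE)
      then show ?thesis unfolding \<psi>_def by (rule VV_cases)
    qed
    have "to_nat ` {p. \<psi> p \<noteq> p} \<subseteq> moved VV \<phi>"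
    proof
      fix n assume "n \<in> to_nat ` {p. \<psi> p \<noteq> p}"
      then obtain p where p: "n = to_nat p" "\<psi> p \<noteq> p" by blast
      have "\<phi> (to_nat p) \<noteq> to_nat p" using p(2) key[of p] by (metis from_nat_to_nat)
      then show "n \<in> moved VV \<phi>" unfolding moved_def using p by simp
    qed
    then have "finite (to_nat ` {p. \<psi> p \<noteq> p})" using fin by (rule finite_subset)
    then have "finite {p. \<psi> p \<noteq> p}" using inj_to_nat by (meson finite_imageD inj_on_subset subset_UNIV)
    then have id: "\<psi> p = p" for p using motionP[OF aut\<psi>] by blast
    obtain v where v: "v \<in> VV" "\<phi> v \<noteq> v" using ex by blast
    then obtain p :: pt where "v = to_nat p" unfolding VV_def by blast
    then show False using v key[of p] id[of p] by simp
  qed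
  show "\<forall>(C :: nat set) (c :: nat \<Rightarrow> nat). finite C \<longrightarrow> \<not> distinguishing_colouring VV EE C c"
  proof (intro allI impI notI)
    fix C :: "nat set" and c :: "nat \<Rightarrow> nat"
    assume fC: "finite C" and dc: "distinguishing_colouring VV EE C c"
    have inC: "\<forall>v\<in>VV. c v \<in> C" and dist: "\<forall>\<phi>. automorphism VV EE \<phi> \<longrightarrow> preserves_colouring VV \<phi> c \<longrightarrow> (\<forall>v\<in>VV. \<phi> v = v)"
      using dc unfolding distinguishing_colouring_def by auto
    define \<kappa> where "\<kappa> x = (c (to_nat (x, False)), c (to_nat (x, True)))" for x :: rat
    have "range \<kappa> \<subseteq> C \<times> C" unfolding \<kappa>_def using inC by auto
    then have "finite (range \<kappa>)" using fC by (meson finite_SigmaI finite_subset)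
    then obtain f where f: "strict_mono f" "surj f" "\<forall>x. \<kappa> (f x) = \<kappa> x" "\<exists>x. f x \<noteq> x"
      using core by blast
    define \<psi> :: "pt \<Rightarrow> pt" where "\<psi> = (\<lambda>(x,i). (f x, i))"
    have aut\<psi>: "automorphism UNIV A \<psi>" unfolding \<psi>_def by (rule lift_aut[OF f(1,2)])
    define \<phi> where "\<phi> n = to_nat (\<psi> (from_nat n))" for n
    have aut: "automorphism VV EE \<phi>" unfolding \<phi>_def by (rule T2[OF aut\<psi>])
    have colp: "c (to_nat (\<psi> p)) = c (to_nat p)" for p
    proof -
      obtain x i where p: "p = (x,i)" by (metis prod.exhaust)
      have "\<kappa> (f x) = \<kappa> x" using f(3) by blast
      then show ?thesis unfolding p \<psi>_def \<kappa>_def by (cases i) auto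
    qed
    have "preserves_colouring VV \<phi> c"
      unfolding preserves_colouring_def
    proof
      fix v assume "v \<in> VV"
      then obtain p :: pt where "v = to_nat p" unfolding VV_def by blast
      then show "c (\<phi> v) = c v" unfolding \<phi>_def using colp by simp
    qed
    then have all: "\<forall>v\<in>VV. \<phi> v = v" using dist aut by blast
    obtain x where x: "f x \<noteq> x" using f(4) by blast
    have "\<phi> (to_nat (x,False)) = to_nat (x,False)" using all by simp
    then have "to_nat (f x, False) = to_nat (x, False)" unfolding \<phi>_def \<psi>_def by simp
    then show False using x by (meson inj_to_nat injD prod.inject)
  qed
qed


end
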